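(* Let $T$ be a chain with entries in $\{1,2\}$, not consisting only of $1$'s and not consisting only of $2$'s, such that the maximal initial block of consecutive $2$'s of $T$ and the maximal final block of consecutive $2$'s of $T$ each have even length (possibly zero), and suppose $\mathcal{Z}(T)>\tfrac13$. Write $T=[1^{e^1_1}2^{e^2_1}1^{e^1_2}2^{e^2_2}\cdots1^{e^1_n}2^{e^2_n}]$, where all $e^j_i$ are positive integers except that $e^1_1$ and $e^2_n$ may be $0$. Then there is $j\in\{1,2\}$ such that $e^j_i\le 2$ for all $i\in\{1,\dots,n\}$.
   Context: A chain is a finite sequence $T=[a_1a_2\dots a_n]$ of positive integers; $c^e$ denotes $e$ consecutive copies of the entry $c$. For a chain $S=[s_1\dots s_m]$, $[0;s_1,\dots,s_m]$ and $[s_1;s_2,\dots,s_m]$ denote finite continued fractions. Define $\mathcal{Z}(T)=\big(\max_{1\le i\le n}([a_i;a_{i+1},\dots,a_n]+[0;a_{i-1},\dots,a_1])\big)^{-1}$, where for $i=1$ the second summand is $0$. *)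

theory Defs
  imports Complex_Main
begin

text \<open>Chains are lists of positive natural numbers.
  cf0 [s1,...,sm] is the finite continued fraction [0; s1, ..., sm] (with cf0 [] = 0),
  so [s1; s2, ..., sm] = s1 + cf0 [s2, ..., sm].\<close>

fun cf0 :: "nat list \<Rightarrow> real" where
  "cf0 [] = 0"
| "cf0 (s # ss) = 1 / (real s + cf0 ss)"

text \<open>Using 0-based index i (paper index i+1):
  [a_i; a_{i+1},...,a_n] = T!i + cf0 (drop (Suc i) T) and
  [0; a_{i-1},...,a_1] = cf0 (rev (take i T)).\<close>

definition chain_term :: "nat list \<Rightarrow> nat \<Rightarrow> real" where
  "chain_term T i = (real (T ! i) + cf0 (drop (Suc i) T)) + cf0 (rev (take i T))"

definition Zc :: "nat list \<Rightarrow> real" where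
  "Zc T = inverse (Max {chain_term T i | i. i < length T})"

end

theory Submission imports Defs begin

lemma cf0_bnd: "set z \<subseteq> {1,2} \<Longrightarrow> 0 \<le> cf0 z \<and> cf0 z \<le> 1"
proof (induction z)
  case Nil then show ?case by simp
next
  case (Cons s z)
  then have h: "0 \<le> cf0 z" "real s \<ge> 1" by auto
  then show ?case by (simp add: field_simps)
qed

lemma cf0_1: "set z \<subseteq> {1,2} \<Longrightarrow> cf0 (1#z) \<ge> 1/2"
proof -
  assume a: "set z \<subseteq> {1,2}"
  have "0 \<le> cf0 z" "cf0 z \<le> 1" using cf0_bnd[OF a] by auto
  then show ?thesis by (simp add: field_simps)
qed

lemma cf0_2: "set z \<subseteq> {1,2} \<Longrightarrow> cf0 (2#z) \<le> 1/2 \<and> cf0 (2#z) \<ge> 1/3"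
proof -
  assume a: "set z \<subseteq> {1,2}"
  have c: "0 \<le> cf0 z" "cf0 z \<le> 1" using cf0_bnd[OF a] by auto
  have "1/(2 + cf0 z) \<le> 1/2" using c by (intro divide_left_mono) auto
  moreover have "1/(2 + cf0 z) \<ge> 1/3" using c by (intro divide_left_mono) auto
  ultimately show ?thesis by simp
qed

lemma cf0_12: "set z \<subseteq> {1,2} \<Longrightarrow> cf0 (1#2#z) \<ge> 2/3"
proof -
  assume a: "set z \<subseteq> {1,2}"
  define y where "y = cf0 (2#z)"
  have c1: "y \<le> 1/2" "y \<ge> 1/3" using cf0_2[OF a] unfolding y_def by blast+
  have e: "cf0 (1#2#z) = 1/(1 + y)" unfolding y_def by (subst cf0.simps(2)) simp
  have "1/(1 + y) \<ge> 1/(1+1/2)" using c1 by (intro divide_left_mono) auto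
  then show ?thesis using e by simp
qed

lemma cf0_21: "set z \<subseteq> {1,2} \<Longrightarrow> cf0 (2#1#z) \<le> 2/5"
proof -
  assume a: "set z \<subseteq> {1,2}"
  have "cf0 (1#z) \<ge> 1/2" using cf0_1[OF a] by auto
  then show ?thesis by (simp add: field_simps)
qed

lemma cf0_222: "set z \<subseteq> {1,2} \<Longrightarrow> cf0 (2#2#2#z) \<le> 5/12"
proof -
  assume a: "set z \<subseteq> {1,2}"
  define y where "y = cf0 (2#z)"
  have c1: "y \<le> 1/2" "y \<ge> 1/3" using cf0_2[OF a] unfolding y_def by blast+
  have e: "cf0 (2#2#2#z) = 1/(2 + 1/(2 + y))" unfolding y_def by (subst cf0.simps(2), subst cf0.simps(2)) simp
  have "1/(2+y) \<ge> 1/(2+1/2)" using c1 by (intro divide_left_mono) auto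
  then have "2 + 1/(2+y) \<ge> 12/5" by simp
  then have "1/(2 + 1/(2+y)) \<le> 1/(12/5)" by (intro divide_left_mono) auto
  then show ?thesis using e by simp
qed

definition phi :: "real \<Rightarrow> real" where "phi x = (5 + 3*x) / (12 + 7*x)"

definition Pq :: "real \<Rightarrow> bool" where "Pq x \<longleftrightarrow> 0 \<le> x \<and> x \<le> 1 \<and> 7*x^2 + 9*x - 5 > 0"

lemma cf0_phi: "set z \<subseteq> {1,2} \<Longrightarrow> cf0 (2#2#1#1#z) = phi (cf0 z)"
proof -
  assume a: "set z \<subseteq> {1,2}"
  have "0 \<le> cf0 z" using cf0_bnd[OF a] by auto
  then show ?thesis by (simp add: phi_def field_simps)
qed

lemma Pq_half: "1/2 \<le> x \<Longrightarrow> x \<le> 1 \<Longrightarrow> Pq x"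
proof -
  assume "1/2 \<le> x" "x \<le> 1"
  moreover have "x^2 \<ge> (1/2)^2" using \<open>1/2 \<le> x\<close> by (intro power_mono) auto
  then have "x^2 \<ge> 1/4" by (simp add: power2_eq_square)
  ultimately show ?thesis unfolding Pq_def by linarith
qed

lemma Pq_gt: "Pq x \<Longrightarrow> x > 5/12"
proof (rule ccontr)
  assume "Pq x" "\<not> x > 5/12"
  then have "0 \<le> x" "x \<le> 5/12" "7*x^2+9*x-5>0" by (auto simp: Pq_def)
  then have "x^2 \<le> (5/12)^2" by (intro power_mono) auto
  then have "x^2 \<le> 25/144" by (simp add: power2_eq_square)
  then show False using \<open>x \<le> 5/12\<close> \<open>7*x^2+9*x-5>0\<close> by linarith
qed

lemma Pq_phi: "Pq x \<Longrightarrow> Pq (phi x)"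
proof -
  assume a: "Pq x"
  then have x: "0 \<le> x" "x \<le> 1" "7*x^2+9*x-5>0" by (auto simp: Pq_def)
  have d: "12 + 7*x > 0" using x by simp
  define p where "p = phi x"
  define D where "D = 12 + 7*x"
  have pD: "p * D = 5 + 3*x" using d unfolding p_def D_def phi_def by simp
  have "(7*p^2 + 9*p - 5) * D^2 = 7*(p*D)^2 + 9*(p*D)*D - 5*D^2"
    by (simp add: power2_eq_square algebra_simps)
  also have "\<dots> = 7*(5+3*x)^2 + 9*(5+3*x)*(12+7*x) - 5*(12+7*x)^2"
  proof -
    have pD': "p*(12+7*x) = 5+3*x" using pD D_def by simp
    show ?thesis unfolding D_def pD' ..
  qed
  also have "\<dots> = 7*x^2+9*x-5"
    by (simp add: power2_eq_square algebra_simps)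
  finally have "(7*(phi x)^2 + 9*(phi x) - 5) * (12+7*x)^2 > 0" using x unfolding p_def D_def by simp
  then have "7*(phi x)^2 + 9*(phi x) - 5 > 0" using d by (simp add: zero_less_mult_iff)
  moreover have "0 \<le> phi x" "phi x \<le> 1" using x d by (auto simp: phi_def field_simps)
  ultimately show ?thesis by (simp add: Pq_def)
qed

lemma phi_less: "Pq x \<Longrightarrow> phi x < x"
proof -
  assume a: "Pq x"
  then have x: "0 \<le> x" "7*x^2+9*x-5>0" by (auto simp: Pq_def)
  have d: "12 + 7*x > 0" using x by simp
  have "x - phi x = (7*x^2+9*x-5)/(12+7*x)"
    using d by (simp add: phi_def field_simps power2_eq_square)
  also have "\<dots> > 0" using x d by simp
  finally show ?thesis by simp
qed

lemma phi_mono: "0 \<le> x \<Longrightarrow> x < y \<Longrightarrow> phi x < phi y"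
  by (simp add: phi_def field_simps)


definition good :: "nat list \<Rightarrow> bool" where
  "good T \<longleftrightarrow> (\<forall>xs c ys. T = xs @ c # ys \<longrightarrow> real c + cf0 ys + cf0 (rev xs) < 3)"

lemma goodD: "good T \<Longrightarrow> T = xs @ c # ys \<Longrightarrow> real c + cf0 ys + cf0 (rev xs) < 3"
  unfolding good_def by blast

lemma good_rev: "good T \<Longrightarrow> good (rev T)"
  unfolding good_def
proof (intro allI impI)
  fix xs c ys assume g: "\<forall>xs c ys. T = xs @ c # ys \<longrightarrow> real c + cf0 ys + cf0 (rev xs) < 3"
    and e: "rev T = xs @ c # ys"
  have "T = rev ys @ c # rev xs" using e by (metis rev_append rev_rev_ident append_Cons append_Nil rev.simps(2) append_assoc)
  then have "real c + cf0 (rev xs) + cf0 (rev (rev ys)) < 3" using g by blast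
  then show "real c + cf0 ys + cf0 (rev xs) < 3" by simp
qed

lemma pair_cond:
  assumes "set X \<subseteq> {1,2}" "set Y \<subseteq> {1,2}"
    and "2 + cf0 (2#X) + cf0 (1#1#Y) < 3"
  shows "cf0 Y < cf0 X"
proof (rule ccontr)
  assume n: "\<not> cf0 Y < cf0 X"
  have x: "0 \<le> cf0 X" and y: "0 \<le> cf0 Y" using cf0_bnd assms by auto
  have "1/(2 + cf0 X) \<ge> 1/(2 + cf0 Y)" using n x y by (simp add: frac_le)
  moreover have "cf0 (1#1#Y) = 1 - 1/(2 + cf0 Y)" using y by (simp add: field_simps)
  ultimately have "2 + cf0 (2#X) + cf0 (1#1#Y) \<ge> 3" by simp
  then show False using assms(3) by simp
qed

lemma key:
  assumes g: "good T" and s: "set T \<subseteq> {1,2}"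
    and par: "even (length (takeWhile (\<lambda>x. x = 2) (rev T)))"
    and T: "T = rev M @ [1,1] @ 2#2#2#w"
    and P: "Pq (cf0 M)"
  shows False
proof -
  have sM: "set M \<subseteq> {1,2}" and sw: "set w \<subseteq> {1,2}" using s T by auto
  have l: "cf0 M > 5/12" using Pq_gt[OF P] .
  show False
  proof (cases w)
    case Nil
    then have "rev T = 2#2#2#1#1#M" using T by simp
    then show False using par by simp
  next
    case (Cons a w1)
    then have "a = 1 \<or> a = 2" using sw by auto
    then show False
    proof
      assume a: "a = 1"
      have "T = (rev M @ [1,1]) @ 2 # (2#2#1#w1)" using T Cons a by simp
      then have "real 2 + cf0 (2#2#1#w1) + cf0 (rev (rev M @ [1,1])) < 3" by (rule goodD[OF g])
      then have "2 + cf0 (2#(2#1#w1)) + cf0 (1#1#M) < 3" by simp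
      then have "cf0 M < cf0 (2#1#w1)" using pair_cond[of "2#1#w1" M] sM sw Cons by auto
      moreover have "cf0 (2#1#w1) \<le> 2/5" using cf0_21[of w1] sw Cons by auto
      ultimately show False using l by simp
    next
      assume a: "a = 2"
      show False
      proof (cases w1)
        case Nil
        have "T = (rev M @ [1,1]) @ 2 # [2,2,2]" using T Cons a Nil by simp
        then have "real 2 + cf0 [2,2,2] + cf0 (rev (rev M @ [1,1])) < 3" by (rule goodD[OF g])
        then have "2 + cf0 (2#[2,2]) + cf0 (1#1#M) < 3" by simp
        then have "cf0 M < cf0 [2,2]" using pair_cond[of "[2,2]" M] sM by auto
        then show False using l by simp
      next
        case (Cons b w2)
        then have "b = 1 \<or> b = 2" using sw \<open>w = a # w1\<close> by auto
        then show False
        proof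
          assume b: "b = 2"
          have "T = (rev M @ [1,1]) @ 2 # (2#2#2#2#w2)" using T \<open>w = a # w1\<close> a Cons b by simp
          then have "real 2 + cf0 (2#2#2#2#w2) + cf0 (rev (rev M @ [1,1])) < 3" by (rule goodD[OF g])
          then have "2 + cf0 (2#(2#2#2#w2)) + cf0 (1#1#M) < 3" by simp
          then have "cf0 M < cf0 (2#2#2#w2)" using pair_cond[of "2#2#2#w2" M] sM sw \<open>w = a # w1\<close> Cons by auto
          moreover have "cf0 (2#2#2#w2) \<le> 5/12" using cf0_222[of w2] sw \<open>w = a # w1\<close> Cons by auto
          ultimately show False using l by simp
        next
          assume b: "b = 1"
          show False
          proof (cases w2)
            case Nil
            have "T = (rev M @ [1,1,2,2,2]) @ 2 # [1]" using T \<open>w = a # w1\<close> a Cons b Nil by simp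
            then have "real 2 + cf0 [1] + cf0 (rev (rev M @ [1,1,2,2,2])) < 3" by (rule goodD[OF g])
            moreover have "0 \<le> cf0 (rev (rev M @ [1,1,2,2,2]))" using cf0_bnd[of "rev (rev M @ [1,1,2,2,2])"] sM by auto
            ultimately show False by simp
          next
            case (Cons c R)
            then have "c = 1 \<or> c = 2" using sw \<open>w = a # w1\<close> \<open>w1 = b # w2\<close> by auto
            have sR: "set R \<subseteq> {1,2}" using sw \<open>w = a # w1\<close> \<open>w1 = b # w2\<close> Cons by auto
            show False using \<open>c = 1 \<or> c = 2\<close>
            proof
              assume c: "c = 2"
              have "T = (rev M @ [1,1,2,2,2]) @ 2 # (1#2#R)" using T \<open>w = a # w1\<close> a \<open>w1 = b # w2\<close> b Cons c by simp
              then have "real 2 + cf0 (1#2#R) + cf0 (rev (rev M @ [1,1,2,2,2])) < 3" by (rule goodD[OF g])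
              then have "2 + cf0 (1#2#R) + cf0 (2#2#2#1#1#M) < 3" by simp
              moreover have "cf0 (1#2#R) \<ge> 2/3" using cf0_12[OF sR] .
              moreover have "cf0 (2#(2#2#1#1#M)) \<ge> 1/3" using cf0_2[of "2#2#1#1#M"] sM by auto
              ultimately show False by simp
            next
              assume c: "c = 1"
              have T1: "T = (rev M @ [1,1]) @ 2 # (2#2#2#1#1#R)" using T \<open>w = a # w1\<close> a \<open>w1 = b # w2\<close> b Cons c by simp
              have T2: "T = (rev M @ [1,1,2,2,2]) @ 2 # (1#1#R)" using T \<open>w = a # w1\<close> a \<open>w1 = b # w2\<close> b Cons c by simp
              have "real 2 + cf0 (2#2#2#1#1#R) + cf0 (rev (rev M @ [1,1])) < 3" using goodD[OF g T1] .
              then have "2 + cf0 (2#(2#2#1#1#R)) + cf0 (1#1#M) < 3" by simp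
              then have c2: "cf0 M < cf0 (2#2#1#1#R)" using pair_cond[of "2#2#1#1#R" M] sM sR by auto
              have "real 2 + cf0 (1#1#R) + cf0 (rev (rev M @ [1,1,2,2,2])) < 3" using goodD[OF g T2] .
              then have "2 + cf0 (2#(2#2#1#1#M)) + cf0 (1#1#R) < 3" by simp
              then have c3: "cf0 R < cf0 (2#2#1#1#M)" using pair_cond[of "2#2#1#1#M" R] sM sR by auto
              have e1: "cf0 (2#2#1#1#R) = phi (cf0 R)" using cf0_phi[OF sR] .
              have e2: "cf0 (2#2#1#1#M) = phi (cf0 M)" using cf0_phi[OF sM] .
              have r0: "0 \<le> cf0 R" using cf0_bnd[OF sR] by simp
              have "phi (cf0 R) < phi (phi (cf0 M))" using phi_mono[OF r0] c3 e2 by simp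
              also have "\<dots> < phi (cf0 M)" using phi_less[OF Pq_phi[OF P]] .
              also have "\<dots> < cf0 M" using phi_less[OF P] .
              finally show False using c2 e1 by simp
            qed
          qed
        qed
      qed
    qed
  qed
qed


definition has3 :: "nat \<Rightarrow> nat list \<Rightarrow> bool" where
  "has3 c w \<longleftrightarrow> (\<exists>i. i + 2 < length w \<and> w!i = c \<and> w!(i+1) = c \<and> w!(i+2) = c)"

lemma has3_Cons: "has3 c (x#w) \<Longrightarrow> x \<noteq> c \<Longrightarrow> has3 c w"
  unfolding has3_def
proof (elim exE conjE)
  fix i assume h: "i + 2 < length (x#w)" "(x#w)!i = c" "(x#w)!(i+1) = c" "(x#w)!(i+2) = c" "x \<noteq> c"
  have "i \<noteq> 0"
  proof
    assume "i = 0" then show False using h(2) h(5) by simp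
  qed
  then obtain j where j: "i = Suc j" by (cases i) auto
  show "\<exists>i. i + 2 < length w \<and> w!i = c \<and> w!(i+1) = c \<and> w!(i+2) = c"
    using h j by (intro exI[of _ j]) simp
qed

lemma has3_2211: "has3 2 (2#2#1#1#w) \<Longrightarrow> has3 2 w"
  unfolding has3_def
proof (elim exE conjE)
  fix i assume h: "i + 2 < length (2#2#1#1#w)" "(2#2#1#1#w)!i = 2" "(2#2#1#1#w)!(i+1) = 2" "(2#2#1#1#w)!(i+2) = 2"
  have "i \<noteq> 0" proof assume "i = 0" then show False using h(4) by simp qed
  moreover have "i \<noteq> 1" proof assume "i = 1" then show False using h(4) by simp qed
  moreover have "i \<noteq> 2" proof assume "i = 2" then show False using h(2) by simp qed
  moreover have "i \<noteq> 3" proof assume "i = 3" then show False using h(2) by simp qed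
  ultimately have "i \<ge> 4" by linarith
  then obtain j where j: "i = j + 4" using le_Suc_ex by (metis add.commute)
  show "\<exists>i. i + 2 < length w \<and> w!i = 2 \<and> w!(i+1) = 2 \<and> w!(i+2) = 2"
    using h j by (intro exI[of _ j]) (simp add: numeral_eq_Suc)
qed

lemma cf0_11: "set M \<subseteq> {1,2} \<Longrightarrow> cf0 (1#1#M) \<ge> 1/2"
  using cf0_1[of "1#M"] by auto

lemma walk:
  assumes g: "good T" and s: "set T \<subseteq> {1,2}"
    and par: "even (length (takeWhile (\<lambda>x. x = 2) (rev T)))"
  shows "T = rev M @ [1,1] @ w \<Longrightarrow> Pq (cf0 M) \<Longrightarrow> has3 2 w \<Longrightarrow> False"
proof (induction w arbitrary: M rule: length_induct)
  case (1 w)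
  note IH = "1.IH" and T = "1.prems"(1) and P = "1.prems"(2) and h = "1.prems"(3)
  have sM: "set M \<subseteq> {1,2}" and sw: "set w \<subseteq> {1,2}" using s T by auto
  have L: "cf0 (1#1#M) \<ge> 1/2" using cf0_11[OF sM] .
  show False
  proof (cases w)
    case Nil then show False using h by (simp add: has3_def)
  next
    case (Cons a w1)
    then have sw1: "set w1 \<subseteq> {1,2}" using sw by auto
    have "a = 1 \<or> a = 2" using sw Cons by auto
    then show False
    proof
      assume a: "a = 1"
      have T': "T = rev (1#M) @ [1,1] @ w1" using T Cons a by simp
      have "cf0 (1#M) \<ge> 1/2" "cf0 (1#M) \<le> 1" using cf0_1[OF sM] cf0_bnd[of "1#M"] sM by auto
      then have P': "Pq (cf0 (1#M))" by (rule Pq_half)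
      have "has3 2 w1" using has3_Cons[of 2 a w1] h Cons a by simp
      then show False using IH[rule_format, of w1 "1#M"] T' P' Cons by simp
    next
      assume a: "a = 2"
      show False
      proof (cases w1)
        case Nil
        then have "rev T = 2#1#1#M" using T Cons a by simp
        then show False using par by simp
      next
        case (Cons b w2)
        then have sw2: "set w2 \<subseteq> {1,2}" using sw1 by auto
        have "b = 1 \<or> b = 2" using sw1 Cons by auto
        then show False
        proof
          assume b: "b = 1"
          have "T = (rev M @ [1,1]) @ 2 # (1#w2)" using T \<open>w = a # w1\<close> a Cons b by simp
          then have "real 2 + cf0 (1#w2) + cf0 (rev (rev M @ [1,1])) < 3" by (rule goodD[OF g])
          then show False using cf0_1[OF sw2] L by simp
        next
          assume b: "b = 2"
          show False
          proof (cases w2)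
            case Nil
            have "T = (rev M @ [1,1]) @ 2 # [2]" using T \<open>w = a # w1\<close> a \<open>w1 = b # w2\<close> b Nil by simp
            then have "real 2 + cf0 [2] + cf0 (rev (rev M @ [1,1])) < 3" by (rule goodD[OF g])
            then show False using L by simp
          next
            case (Cons c w3)
            then have sw3: "set w3 \<subseteq> {1,2}" using sw2 by auto
            have "c = 1 \<or> c = 2" using sw2 Cons by auto
            then show False
            proof
              assume c: "c = 2"
              have "T = rev M @ [1,1] @ 2#2#2#w3" using T \<open>w = a # w1\<close> a \<open>w1 = b # w2\<close> b Cons c by simp
              then show False using key[OF g s par _ P] by blast
            next
              assume c: "c = 1"
              show False
              proof (cases w3)
                case Nil
                have "T = (rev M @ [1,1,2]) @ 2 # [1]" using T \<open>w = a # w1\<close> a \<open>w1 = b # w2\<close> b \<open>w2 = c # w3\<close> c Nil by simp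
                then have "real 2 + cf0 [1] + cf0 (rev (rev M @ [1,1,2])) < 3" by (rule goodD[OF g])
                moreover have "0 \<le> cf0 (rev (rev M @ [1,1,2]))" using cf0_bnd[of "rev (rev M @ [1,1,2])"] sM by auto
                ultimately show False by simp
              next
                case (Cons d w4)
                then have sw4: "set w4 \<subseteq> {1,2}" using sw3 by auto
                have "d = 1 \<or> d = 2" using sw3 Cons by auto
                then show False
                proof
                  assume d: "d = 2"
                  have "T = (rev M @ [1,1,2]) @ 2 # (1#2#w4)" using T \<open>w = a # w1\<close> a \<open>w1 = b # w2\<close> b \<open>w2 = c # w3\<close> c Cons d by simp
                  then have "real 2 + cf0 (1#2#w4) + cf0 (rev (rev M @ [1,1,2])) < 3" by (rule goodD[OF g])
                  then have "2 + cf0 (1#2#w4) + cf0 (2#1#1#M) < 3" by simp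
                  moreover have "cf0 (1#2#w4) \<ge> 2/3" using cf0_12[OF sw4] .
                  moreover have "cf0 (2#(1#1#M)) \<ge> 1/3" using cf0_2[of "1#1#M"] sM by auto
                  ultimately show False by simp
                next
                  assume d: "d = 1"
                  have wf: "w = 2#2#1#1#w4" using \<open>w = a # w1\<close> a \<open>w1 = b # w2\<close> b \<open>w2 = c # w3\<close> c Cons d by simp
                  have T': "T = rev (2#2#1#1#M) @ [1,1] @ w4" using T wf by simp
                  have P': "Pq (cf0 (2#2#1#1#M))" using cf0_phi[OF sM] Pq_phi[OF P] by simp
                  have "has3 2 w4" using has3_2211 h wf by simp
                  then show False using IH[rule_format, of w4 "2#2#1#1#M"] T' P' wf by simp
                qed
              qed
            qed
          qed
        qed
      qed
    qed
  qed
qed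


lemma core:
  assumes g: "good T" and s: "set T \<subseteq> {1,2}"
    and par: "even (length (takeWhile (\<lambda>x. x = 2) (rev T)))"
    and T1: "T = a @ [1,1,1] @ b" and T2: "T = c @ [2,2,2] @ d"
    and lt: "length a < length c"
  shows False
proof -
  define p where "p = length a"
  define q where "q = length c"
  have Tq: "T!q = 2" "T!(q+1) = 2" "T!(q+2) = 2" using T2 unfolding q_def by (simp_all add: nth_append)
  have Tp: "T!(p+1) = 1" "T!(p+2) = 1" using T1 unfolding p_def by (simp_all add: nth_append)
  have "q \<noteq> p+1" "q \<noteq> p+2" using Tq Tp by auto
  then have q3: "p + 3 \<le> q" using lt unfolding p_def q_def by linarith
  have len: "q + 2 < length T" using T2 unfolding q_def by simp
  have bk: "b ! k = T ! (p + 3 + k)" for k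
    using T1 unfolding p_def by (simp add: nth_append)
  have lb: "length b = length T - (p + 3)" using T1 unfolding p_def by simp
  have "has3 2 b" unfolding has3_def
  proof (intro exI[of _ "q - (p+3)"] conjI)
    show "q - (p + 3) + 2 < length b" using lb len q3 by linarith
    show "b ! (q - (p + 3)) = 2" using bk[of "q - (p+3)"] Tq q3 by simp
    show "b ! (q - (p + 3) + 1) = 2" using bk[of "q - (p+3) + 1"] Tq q3 by (simp add: algebra_simps)
    show "b ! (q - (p + 3) + 2) = 2" using bk[of "q - (p+3) + 2"] Tq q3 by (simp add: algebra_simps)
  qed
  moreover have "T = rev (1 # rev a) @ [1,1] @ b" using T1 by simp
  moreover have "Pq (cf0 (1 # rev a))"
  proof -
    have sa: "set (rev a) \<subseteq> {1,2}" using s T1 by auto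
    have "cf0 (1 # rev a) \<ge> 1/2" using cf0_1[OF sa] .
    moreover have "cf0 (1 # rev a) \<le> 1" using cf0_bnd[of "1 # rev a"] sa by auto
    ultimately show ?thesis by (rule Pq_half)
  qed
  ultimately show False using walk[OF g s par] by blast
qed

lemma split_concat:
  assumes "1 \<le> i" "i \<le> n"
  shows "concat (map f [1..<Suc n]) = concat (map f [1..<i]) @ f i @ concat (map f [Suc i..<Suc n])"
proof -
  have "[1..<Suc n] = [1..<i] @ [i..<Suc n]" using assms
    using upt_add_eq_append[of 1 i "Suc n - i"] assms by simp
  moreover have "[i..<Suc n] = i # [Suc i..<Suc n]" using assms by (simp add: upt_conv_Cons)
  ultimately show ?thesis by simp
qed

theorem lemma3p6:
  fixes T :: "nat list" and n :: nat and e1 e2 :: "nat \<Rightarrow> nat"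
  assumes "set T \<subseteq> {1, 2}"
    and "1 \<in> set T" and "2 \<in> set T"
    and "even (length (takeWhile (\<lambda>x. x = 2) T))"
    and "even (length (takeWhile (\<lambda>x. x = 2) (rev T)))"
    and "Zc T > 1 / 3"
    and "n \<ge> 1"
    and "T = concat (map (\<lambda>i. replicate (e1 i) 1 @ replicate (e2 i) 2) [1..<Suc n])"
    and "\<forall>i\<in>{2..n}. e1 i > 0"
    and "\<forall>i\<in>{1..<n}. e2 i > 0"
  shows "(\<forall>i\<in>{1..n}. e1 i \<le> 2) \<or> (\<forall>i\<in>{1..n}. e2 i \<le> 2)"
proof (rule ccontr)
  assume nc: "\<not> ?thesis"
  then obtain i j where i: "i \<in> {1..n}" "e1 i > 2" and j: "j \<in> {1..n}" "e2 j > 2"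
    by (auto simp: not_le)
  define f where "f = (\<lambda>i. replicate (e1 i) (1::nat) @ replicate (e2 i) 2)"
  have TT: "T = concat (map f [1..<Suc n])" using assms(8) unfolding f_def by simp
  obtain a b where T1: "T = a @ [1,1,1] @ b"
  proof -
    have "T = concat (map f [1..<i]) @ f i @ concat (map f [Suc i..<Suc n])"
      using TT split_concat[of i n f] i by auto
    moreover have "replicate (e1 i) (1::nat) = [1,1,1] @ replicate (e1 i - 3) 1"
    proof -
      have "e1 i = Suc (Suc (Suc (e1 i - 3)))" using i(2) by simp
      then show ?thesis by (metis replicate_Suc append_Cons append_Nil)
    qed
    ultimately have "T = concat (map f [1..<i]) @ [1,1,1] @ (replicate (e1 i - 3) 1 @ replicate (e2 i) 2 @ concat (map f [Suc i..<Suc n]))"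
      unfolding f_def by simp
    then show ?thesis using that by blast
  qed
  obtain c d where T2: "T = c @ [2,2,2] @ d"
  proof -
    have "T = concat (map f [1..<j]) @ f j @ concat (map f [Suc j..<Suc n])"
      using TT split_concat[of j n f] j by auto
    moreover have "replicate (e2 j) (2::nat) = [2,2,2] @ replicate (e2 j - 3) 2"
    proof -
      have "e2 j = Suc (Suc (Suc (e2 j - 3)))" using j(2) by simp
      then show ?thesis by (metis replicate_Suc append_Cons append_Nil)
    qed
    ultimately have "T = (concat (map f [1..<j]) @ replicate (e1 j) 1) @ [2,2,2] @ (replicate (e2 j - 3) 2 @ concat (map f [Suc j..<Suc n]))"
      unfolding f_def by simp
    then show ?thesis using that by blast
  qed
  have g: "good T"
  proof -
    define S where "S = {chain_term T i | i. i < length T}"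
    have S': "S = (chain_term T) ` {..<length T}" unfolding S_def by auto
    have fin: "finite S" unfolding S' by simp
    have ne: "S \<noteq> {}" unfolding S' using assms(2) by (cases T) auto
    have z: "inverse (Max S) > 1/3" using assms(6) unfolding Zc_def S_def by simp
    have m0: "Max S > 0"
    proof (rule ccontr)
      assume "\<not> Max S > 0"
      then have "inverse (Max S) \<le> 0" using inverse_nonpositive_iff_nonpositive not_less by blast
      then show False using z by linarith
    qed
    have m3: "Max S < 3"
    proof (rule ccontr)
      assume "\<not> Max S < 3"
      then have "inverse (Max S) \<le> inverse 3" using m0 by (intro le_imp_inverse_le) auto
      then show False using z by (simp add: inverse_eq_divide)
    qed
    show ?thesis unfolding good_def
    proof (intro allI impI)
      fix xs c ys assume e: "T = xs @ c # ys"
      have "length xs < length T" using e by simp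
      then have "chain_term T (length xs) \<in> S" unfolding S_def by blast
      then have "chain_term T (length xs) \<le> Max S" using fin by simp
      moreover have "chain_term T (length xs) = real c + cf0 ys + cf0 (rev xs)"
        unfolding chain_term_def e by simp
      ultimately show "real c + cf0 ys + cf0 (rev xs) < 3" using m3 by simp
    qed
  qed
  have ne: "length a \<noteq> length c"
  proof
    assume eq: "length a = length c"
    have "T ! length a = 1" using T1 by (simp add: nth_append)
    moreover have "T ! length c = 2" using T2 by (simp add: nth_append)
    ultimately show False using eq by simp
  qed
  show False
  proof (cases "length a < length c")
    case True
    then show False using core[OF g assms(1) assms(5) T1 T2] by blast
  next
    case False
    then have lt: "length c < length a" using ne by simp
    have R1: "rev T = rev b @ [1,1,1] @ rev a" using T1 by simp
    have R2: "rev T = rev d @ [2,2,2] @ rev c" using T2 by simp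
    have "length (rev b) < length (rev d)"
    proof -
      have "length T = length a + 3 + length b" using T1 by simp
      moreover have "length T = length c + 3 + length d" using T2 by simp
      ultimately show ?thesis using lt by simp
    qed
    moreover have "good (rev T)" using good_rev[OF g] .
    moreover have "set (rev T) \<subseteq> {1,2}" using assms(1) by simp
    moreover have "even (length (takeWhile (\<lambda>x. x = 2) (rev (rev T))))" using assms(4) by simp
    ultimately show False using core[OF _ _ _ R1 R2] by blast
  qed
qed

end
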